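(* Let $n\ge2$. For $j\le m$ let $P_j^m$ denote the joint distribution of $(\tau_1^m,\dots,\tau_j^m)$. Then the law $P_{n-1}^n$ of $(\tau_1^n,\dots,\tau_{n-1}^n)$ has, with respect to the law $P_{n-1}^{n-1}$ of $(\tau_1^{n-1},\dots,\tau_{n-1}^{n-1})$, the density \[ \frac{P_{n-1}^n(t_1,\dots,t_{n-1})}{P_{n-1}^{n-1}(t_1,\dots,t_{n-1})} = K_n\Big(1-\frac1n\Big)^{(n-1)\big(\frac{1}{n-1}\sum_{i=1}^{n-1}(t_i-\log(n-1))\big)}, \] for $(t_1,\dots,t_{n-1})$ in the support of $P_{n-1}^{n-1}$.
   Context: For $m\ge1$, $\tau_1^m,\dots,\tau_m^m$ are independent with $\tau_i^m\sim\operatorname{Geom}\big(\frac{m-i+1}{m}\big)$, where $\operatorname{Geom}(p)$ is the geometric law on $\{1,2,\dots\}$, $P(k)=p(1-p)^{k-1}$ (with $0^0=1$). $K_n=n\big(1-\frac1n\big)^{(n-1)\log(n-1)}$. *)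

theory Defs
  imports "HOL-Probability.Probability"
begin

text \<open>Geometric law on {1,2,...} with success probability p: P(k) = p (1-p)^(k-1).
  The library's geometric_pmf counts failures (support {0,1,...}), so we shift by one.\<close>
definition geom1_pmf :: "real \<Rightarrow> nat pmf" where
  "geom1_pmf p = map_pmf Suc (geometric_pmf p)"

text \<open>Joint law P_j^m of (tau_1^m, ..., tau_j^m), independent, tau_i^m ~ Geom((m-i+1)/m).
  A vector (t_1,...,t_j) is represented as a function t :: nat => nat with t i = 0 for i outside {1..j}.\<close>
definition tau_law :: "nat \<Rightarrow> nat \<Rightarrow> (nat \<Rightarrow> nat) pmf" where
  "tau_law m j = Pi_pmf {1..j} 0 (\<lambda>i. geom1_pmf ((real m - real i + 1) / real m))"

definition K :: "nat \<Rightarrow> real" where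
  "K n = real n * (1 - 1 / real n) powr ((real n - 1) * ln (real n - 1))"

end

theory Submission
  imports Defs
begin

lemma pmf_geom1_Suc:
  assumes "0 < p" "p \<le> 1"
  shows "pmf (geom1_pmf p) (Suc j) = (1 - p) ^ j * p"
  unfolding geom1_pmf_def using assms by (simp add: pmf_map_inj')

lemma pmf_geom1_0: "pmf (geom1_pmf p) 0 = 0"
  unfolding geom1_pmf_def by (simp add: pmf_map set_pmf_eq measure_pmf_zero_iff vimage_def)

lemma telescope: "(\<Prod>j=1..N. (real j + 1) / real j) = real N + 1"
  by (induction N) (auto simp: prod.nat_ivl_Suc' field_simps)

lemma factor:
  fixes n i k :: nat
  assumes n: "n \<ge> 2" and i: "1 \<le> i" "i \<le> n - 1"
    and nz: "pmf (geom1_pmf ((real (n-1) - real i + 1) / real (n-1))) k \<noteq> 0"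
  shows "pmf (geom1_pmf ((real n - real i + 1) / real n)) k
       / pmf (geom1_pmf ((real (n-1) - real i + 1) / real (n-1))) k
       = (real (n - i) + 1) / real (n - i) * (1 - 1 / real n) ^ k"
proof -
  obtain j where k: "k = Suc j" using nz by (cases k) (auto simp: pmf_geom1_0)
  define N where "N = real n - 1"
  have N1: "real (n-1) = N" using n by (simp add: N_def)
  have ni: "real (n - i) = real n - real i" using i by simp
  have p1: "0 < (real n - real i + 1) / real n" "(real n - real i + 1) / real n \<le> 1"
    using i n by auto
  have p2: "0 < (N - real i + 1) / N" "(N - real i + 1) / N \<le> 1"
    using i n by (auto simp: N_def)
  have e1: "1 - (real n - real i + 1) / real n = (real i - 1) / real n" using n by (simp add: field_simps)
  have e2: "1 - (N - real i + 1) / N = (real i - 1) / N" using n by (simp add: field_simps N_def)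
  have "(1 - (N - real i + 1) / N) ^ j * ((N - real i + 1) / N) \<noteq> 0"
    using nz p2 unfolding k N1 by (simp only: pmf_geom1_Suc, simp)
  hence nz2: "((real i - 1) / N) ^ j \<noteq> 0" unfolding e2 by (metis mult_zero_left)
  have ratio: "((real i - 1) / real n) ^ j / ((real i - 1) / N) ^ j = (N / real n) ^ j"
  proof (cases "j = 0")
    case False
    then have "real i \<noteq> 1" using nz2 by auto
    then show ?thesis using n by (simp add: power_divide field_simps N_def)
  qed simp
  have "pmf (geom1_pmf ((real n - real i + 1) / real n)) k
       / pmf (geom1_pmf ((real (n-1) - real i + 1) / real (n-1))) k
     = (((real i - 1) / real n) ^ j / ((real i - 1) / N) ^ j) *
       (((real n - real i + 1) / real n) / ((N - real i + 1) / N))"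
    unfolding k N1 using p1 p2 by (simp add: pmf_geom1_Suc e1 e2, simp only: mult_ac)
  also have "\<dots> = (N / real n) ^ j * (((real n - real i + 1) / real n) / ((N - real i + 1) / N))"
    by (simp add: ratio)
  also have "\<dots> = (real (n - i) + 1) / real (n - i) * (1 - 1 / real n) ^ k"
  proof -
    have a: "N - real i + 1 = real n - real i" by (simp add: N_def)
    have b: "1 - 1 / real n = N / real n" using n by (simp add: N_def field_simps)
    have c: "real n - real i \<noteq> 0" using i n by simp
    have d: "((real n - real i + 1) / real n) / ((N - real i + 1) / N)
          = (real n - real i + 1) / (real n - real i) * (N / real n)"
      unfolding a using c n by (simp add: divide_simps)
    show ?thesis unfolding k ni d b power_Suc by (simp only: mult_ac)
  qed
  finally show ?thesis .
qed

theorem lemma3p6: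
  fixes n :: nat and t :: "nat \<Rightarrow> nat"
  assumes "n \<ge> 2"
    and "t \<in> set_pmf (tau_law (n - 1) (n - 1))"
  shows "pmf (tau_law n (n - 1)) t / pmf (tau_law (n - 1) (n - 1)) t
         = K n * (1 - 1 / real n) powr ((real n - 1) *
             ((1 / (real n - 1)) * (\<Sum>i = 1..n - 1. (real (t i) - ln (real n - 1)))))"
proof -
  let ?N = "n - 1"
  let ?q = "1 - 1 / real n"
  have tin: "t \<in> PiE_dflt {1..?N} 0 (set_pmf \<circ> (\<lambda>i. geom1_pmf ((real (n-1) - real i + 1) / real (n-1))))"
    using assms(2) set_Pi_pmf[of "{1..?N}" 0] unfolding tau_law_def by (metis finite_atLeastAtMost)
  have out: "\<And>x. x \<notin> {1..?N} \<Longrightarrow> t x = 0"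
    using tin unfolding PiE_dflt_def by simp
  have nz: "pmf (geom1_pmf ((real (n-1) - real i + 1) / real (n-1))) (t i) \<noteq> 0" if "i \<in> {1..?N}" for i
  proof -
    have "t i \<in> set_pmf (geom1_pmf ((real (n-1) - real i + 1) / real (n-1)))"
      using tin that unfolding PiE_dflt_def by simp
    then show ?thesis using set_pmf_iff by metis
  qed
  have "pmf (tau_law n ?N) t / pmf (tau_law ?N ?N) t
     = (\<Prod>i\<in>{1..?N}. pmf (geom1_pmf ((real n - real i + 1) / real n)) (t i)
         / pmf (geom1_pmf ((real (n-1) - real i + 1) / real (n-1))) (t i))"
  proof -
    have P: "pmf (Pi_pmf {1..?N} 0 p) t = (\<Prod>i\<in>{1..?N}. pmf (p i) (t i))" for p :: "nat \<Rightarrow> nat pmf"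
      by (rule pmf_Pi') (auto intro: out)
    show ?thesis unfolding tau_law_def P by (rule prod_dividef[symmetric])
  qed
  also have "\<dots> = (\<Prod>i\<in>{1..?N}. (real (n - i) + 1) / real (n - i) * ?q ^ t i)"
  proof (rule prod.cong[OF refl])
    fix i assume i: "i \<in> {1..?N}"
    show "pmf (geom1_pmf ((real n - real i + 1) / real n)) (t i)
         / pmf (geom1_pmf ((real (n-1) - real i + 1) / real (n-1))) (t i)
         = (real (n - i) + 1) / real (n - i) * ?q ^ t i"
      using i by (intro factor[OF assms(1) _ _ nz[OF i]]) auto
  qed
  also have "\<dots> = (\<Prod>i\<in>{1..?N}. (real (n - i) + 1) / real (n - i)) * ?q ^ (\<Sum>i\<in>{1..?N}. t i)"
    by (simp only: prod.distrib power_sum)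
  also have "(\<Prod>i\<in>{1..?N}. (real (n - i) + 1) / real (n - i)) = (\<Prod>j\<in>{1..?N}. (real j + 1) / real j)"
  proof -
    have nN: "Suc (n - Suc 0) = n" using assms(1) by simp
    show ?thesis by (subst prod.atLeastAtMost_rev) (rule prod.cong[OF refl], simp add: nN)
  qed
  also have "\<dots> = real n" unfolding telescope using assms(1) by simp
  finally have L: "pmf (tau_law n ?N) t / pmf (tau_law ?N ?N) t = real n * ?q ^ (\<Sum>i\<in>{1..?N}. t i)" .
  have q: "?q > 0" using assms(1) by simp
  have s: "(\<Sum>i = 1..n - 1. (real (t i) - ln (real n - 1))) = real (\<Sum>i\<in>{1..?N}. t i) - (real n - 1) * ln (real n - 1)"
    using assms(1) by (simp add: sum_subtractf)
  have c: "(real n - 1) * (1 / (real n - 1)) = 1" using assms(1) by simp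
  define S where "S = real (\<Sum>i\<in>{1..?N}. t i)"
  define A where "A = (real n - 1) * ln (real n - 1)"
  have "(real n - 1) * ((1 / (real n - 1)) * (\<Sum>i = 1..n - 1. (real (t i) - ln (real n - 1)))) = S - A"
    unfolding s S_def A_def using c by (metis mult.assoc mult_1)
  hence "K n * ?q powr ((real n - 1) * ((1 / (real n - 1)) * (\<Sum>i = 1..n - 1. (real (t i) - ln (real n - 1)))))
      = real n * (?q powr A * ?q powr (S - A))"
    unfolding K_def A_def by (simp only: mult.assoc)
  also have "\<dots> = real n * ?q powr S"
    by (simp only: powr_add[symmetric]) simp
  also have "\<dots> = real n * ?q ^ (\<Sum>i\<in>{1..?N}. t i)" unfolding S_def by (subst powr_realpow[OF q]) (rule refl)
  finally show ?thesis using L by simp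
qed

end
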